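(* Let $\tilde C(q)=\sum_{g\ge3}\tilde c_gq^g$, where $\tilde c_g$ is the number of NSG-compositions $x_1+\cdots+x_{m-1}$ of genus $g$ with maximum $3$ and last part $x_{m-1}=3$. Then the generating series $\sum_g a_gq^g$, where $a_g$ is the number of NSG-compositions of genus $g$ with maximum exactly $3$, equals $\dfrac{\tilde C(q)}{1-q-q^2}$. Consequently the generating series of all NSG-compositions with maximum at most $3$ (including the empty one) is $\dfrac{1+\tilde C(q)}{1-q-q^2}$.
   Context: An NSG-composition is a composition $x_1+\cdots+x_{m-1}$ of positive integers ($m\ge1$, empty composition allowed) satisfying $x_{s+t}\le x_s+x_t$ and $x_{m-s-t}\le x_{m-s}+x_{m-t}+1$ for all $s,t\ge1$, $s+t<m$ (equivalently, the Kunz vector of a numerical semigroup of multiplicity $m$); its genus is $\sum x_j$ and its maximum is $\max_jx_j$. Equivalently, $\tilde c_g$ is the number of numerical semigroups of genus $g$ with Frobenius number $3m-1$, $m$ the multiplicity. *)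

theory Defs
  imports "HOL-Computational_Algebra.Formal_Power_Series"
begin

text \<open>A composition x_1 + ... + x_(m-1) is represented by the list xs = [x_1,...,x_(m-1)],
  so m = length xs + 1 and x_j = xs ! (j - 1).\<close>

definition comp_part :: "nat list \<Rightarrow> nat \<Rightarrow> nat" where
  "comp_part xs j = xs ! (j - 1)"

definition nsg_composition :: "nat list \<Rightarrow> bool" where
  "nsg_composition xs \<longleftrightarrow>
     (\<forall>x\<in>set xs. x > 0) \<and>
     (let m = length xs + 1 in
       \<forall>s t. 1 \<le> s \<longrightarrow> 1 \<le> t \<longrightarrow> s + t < m \<longrightarrow>
         comp_part xs (s + t) \<le> comp_part xs s + comp_part xs t \<and>
         comp_part xs (m - s - t) \<le> comp_part xs (m - s) + comp_part xs (m - t) + 1)"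

definition genus :: "nat list \<Rightarrow> nat" where
  "genus xs = sum_list xs"

definition comp_max :: "nat list \<Rightarrow> nat" where
  "comp_max xs = Max (set xs)"

definition ctilde :: "nat \<Rightarrow> nat" where
  "ctilde g = card {xs. nsg_composition xs \<and> genus xs = g \<and> xs \<noteq> [] \<and>
                        comp_max xs = 3 \<and> last xs = 3}"

definition a_max3 :: "nat \<Rightarrow> nat" where
  "a_max3 g = card {xs. nsg_composition xs \<and> genus xs = g \<and> xs \<noteq> [] \<and> comp_max xs = 3}"

definition b_le3 :: "nat \<Rightarrow> nat" where
  "b_le3 g = card {xs. nsg_composition xs \<and> genus xs = g \<and> (\<forall>x\<in>set xs. x \<le> 3)}"

end

theory Submission
  imports Defs
begin

lemma fps_rec:
  fixes f e :: "nat \<Rightarrow> rat"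
  assumes "\<And>n. f n = e n + (if 1 \<le> n then f (n-1) else 0) + (if 2 \<le> n then f (n-2) else 0)"
  shows "Abs_fps f = Abs_fps e / (1 - fps_X - fps_X ^ 2)"
proof -
  let ?D = "1 - fps_X - fps_X ^ 2 :: rat fps"
  have D0: "?D \<noteq> 0"
  proof
    assume "?D = 0" hence "fps_nth ?D 0 = 0" by simp
    thus False by simp
  qed
  have "Abs_fps f * ?D = Abs_fps e"
  proof (rule fps_ext)
    fix n
    have "fps_nth (Abs_fps f * ?D) n = f n - fps_nth (fps_X * Abs_fps f) n - fps_nth (fps_X^2 * Abs_fps f) n"
      by (simp add: algebra_simps)
    also have "\<dots> = e n" using assms[of n]
      by (simp add: fps_X_mult_nth fps_X_power_mult_nth)
    finally show "fps_nth (Abs_fps f * ?D) n = fps_nth (Abs_fps e) n" by simp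
  qed
  hence "Abs_fps e / ?D = Abs_fps f * ?D / ?D" by simp
  also have "\<dots> = Abs_fps f" using D0 by simp
  finally show ?thesis by simp
qed

lemma nsg_char:
  assumes le3: "\<forall>x\<in>set xs. x \<le> 3"
  shows "nsg_composition xs \<longleftrightarrow> (\<forall>x\<in>set xs. 0 < x) \<and>
    (\<forall>s t. 1 \<le> s \<longrightarrow> 1 \<le> t \<longrightarrow> s + t \<le> length xs \<longrightarrow>
       xs ! (s + t - 1) \<le> xs ! (s - 1) + xs ! (t - 1))" (is "?L \<longleftrightarrow> ?P \<and> ?C")
proof
  assume ?L
  thus "?P \<and> ?C" unfolding nsg_composition_def comp_part_def Let_def by auto
next
  assume H: "?P \<and> ?C"
  have pos: "\<And>i. i < length xs \<Longrightarrow> 1 \<le> xs ! i" proof -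
    fix i assume "i < length xs"
    hence "0 < xs ! i" using H nth_mem by blast
    thus "1 \<le> xs ! i" by simp
  qed
  have le: "\<And>i. i < length xs \<Longrightarrow> xs ! i \<le> 3" using le3 by (meson nth_mem)
  show ?L unfolding nsg_composition_def comp_part_def Let_def
  proof (intro conjI allI impI)
    show "\<forall>x\<in>set xs. 0 < x" using H by blast
  next
    fix s t assume a: "1 \<le> s" "1 \<le> t" "s + t < length xs + 1"
    show "xs ! (s + t - 1) \<le> xs ! (s - 1) + xs ! (t - 1)" using H a by auto
    have "xs ! (length xs + 1 - s - t - 1) \<le> 3" using le a by simp
    moreover have "1 \<le> xs ! (length xs + 1 - s - 1)" using pos a by simp
    moreover have "1 \<le> xs ! (length xs + 1 - t - 1)" using pos a by simp
    ultimately show "xs ! (length xs + 1 - s - t - 1)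
        \<le> xs ! (length xs + 1 - s - 1) + xs ! (length xs + 1 - t - 1) + 1" by linarith
  qed
qed

definition Q :: "nat list \<Rightarrow> bool" where
  "Q xs \<longleftrightarrow> nsg_composition xs \<and> (\<forall>x\<in>set xs. x \<le> 3)"

lemma Q_append:
  assumes y: "y = 1 \<or> y = 2"
  shows "Q (xs @ [y]) \<longleftrightarrow> Q xs"
proof -
  have l1: "\<forall>x\<in>set (xs@[y]). x \<le> 3" if "\<forall>x\<in>set xs. x \<le> 3" using that y by auto
  have l2: "(\<forall>x\<in>set (xs@[y]). 0 < x) \<longleftrightarrow> (\<forall>x\<in>set xs. 0 < x)" using y by auto
  have l3: "(\<forall>s t. 1 \<le> s \<longrightarrow> 1 \<le> t \<longrightarrow> s + t \<le> length (xs@[y]) \<longrightarrow>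
       (xs@[y]) ! (s + t - 1) \<le> (xs@[y]) ! (s - 1) + (xs@[y]) ! (t - 1)) \<longleftrightarrow>
     (\<forall>s t. 1 \<le> s \<longrightarrow> 1 \<le> t \<longrightarrow> s + t \<le> length xs \<longrightarrow>
       xs ! (s + t - 1) \<le> xs ! (s - 1) + xs ! (t - 1))"
    if pos: "\<forall>x\<in>set xs. 0 < x"
  proof
    assume A: "\<forall>s t. 1 \<le> s \<longrightarrow> 1 \<le> t \<longrightarrow> s + t \<le> length (xs@[y]) \<longrightarrow>
       (xs@[y]) ! (s + t - 1) \<le> (xs@[y]) ! (s - 1) + (xs@[y]) ! (t - 1)"
    show "\<forall>s t. 1 \<le> s \<longrightarrow> 1 \<le> t \<longrightarrow> s + t \<le> length xs \<longrightarrow>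
       xs ! (s + t - 1) \<le> xs ! (s - 1) + xs ! (t - 1)"
    proof (intro allI impI)
      fix s t assume a: "1 \<le> s" "1 \<le> t" "s + t \<le> length xs"
      from A a have "(xs@[y]) ! (s + t - 1) \<le> (xs@[y]) ! (s - 1) + (xs@[y]) ! (t - 1)" by simp
      moreover have "s + t - 1 < length xs" "s - 1 < length xs" "t - 1 < length xs" using a by auto
      ultimately show "xs ! (s + t - 1) \<le> xs ! (s - 1) + xs ! (t - 1)" by (simp add: nth_append)
    qed
  next
    assume A: "\<forall>s t. 1 \<le> s \<longrightarrow> 1 \<le> t \<longrightarrow> s + t \<le> length xs \<longrightarrow>
       xs ! (s + t - 1) \<le> xs ! (s - 1) + xs ! (t - 1)"
    show "\<forall>s t. 1 \<le> s \<longrightarrow> 1 \<le> t \<longrightarrow> s + t \<le> length (xs@[y]) \<longrightarrow>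
       (xs@[y]) ! (s + t - 1) \<le> (xs@[y]) ! (s - 1) + (xs@[y]) ! (t - 1)"
    proof (intro allI impI)
      fix s t assume a: "1 \<le> s" "1 \<le> t" "s + t \<le> length (xs@[y])"
      show "(xs@[y]) ! (s + t - 1) \<le> (xs@[y]) ! (s - 1) + (xs@[y]) ! (t - 1)"
      proof (cases "s + t \<le> length xs")
        case True
        moreover have "s + t - 1 < length xs" "s - 1 < length xs" "t - 1 < length xs" using a True by auto
        ultimately show ?thesis using A a by (simp add: nth_append)
      next
        case False
        hence st: "s + t = length xs + 1" using a by simp
        have "0 < xs ! (s - 1)" using pos a st by (intro bspec[OF pos] nth_mem) simp
        moreover have "0 < xs ! (t - 1)" using pos a st by (intro bspec[OF pos] nth_mem) simp
        ultimately show ?thesis using st a y by (auto simp add: nth_append)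
      qed
    qed
  qed
  show ?thesis
  proof
    assume "Q (xs @ [y])"
    hence n: "nsg_composition (xs@[y])" and b: "\<forall>x\<in>set (xs@[y]). x \<le> 3" unfolding Q_def by auto
    hence b': "\<forall>x\<in>set xs. x \<le> 3" by simp
    from n nsg_char[OF b] have "\<forall>x\<in>set xs. 0 < x" using l2 by blast
    with n nsg_char[OF b] nsg_char[OF b'] l2 l3 b' show "Q xs" unfolding Q_def by blast
  next
    assume "Q xs"
    hence n: "nsg_composition xs" and b': "\<forall>x\<in>set xs. x \<le> 3" unfolding Q_def by auto
    note b = l1[OF b']
    from n nsg_char[OF b'] have "\<forall>x\<in>set xs. 0 < x" by blast
    with n nsg_char[OF b] nsg_char[OF b'] l2 l3 b show "Q (xs@[y])" unfolding Q_def by blast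
  qed
qed

definition S :: "(nat list \<Rightarrow> bool) \<Rightarrow> nat \<Rightarrow> nat list set" where
  "S R g = {xs. Q xs \<and> sum_list xs = g \<and> R xs}"

lemma length_le_sum: "\<forall>x\<in>set xs. 0 < (x::nat) \<Longrightarrow> length xs \<le> sum_list xs"
  by (induction xs) auto

lemma Q_pos: "Q xs \<Longrightarrow> x \<in> set xs \<Longrightarrow> 0 < x \<and> x \<le> 3"
  unfolding Q_def nsg_composition_def by auto

lemma finite_S: "finite (S R g)"
proof (rule finite_subset)
  show "S R g \<subseteq> {xs. set xs \<subseteq> {0..g} \<and> length xs \<le> g}"
  proof
    fix xs assume "xs \<in> S R g"
    hence q: "Q xs" and s: "sum_list xs = g" unfolding S_def by auto
    have "\<forall>x\<in>set xs. 0 < x" using Q_pos[OF q] by blast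
    hence "length xs \<le> g" using length_le_sum s by metis
    moreover have "set xs \<subseteq> {0..g}" using member_le_sum_list s by fastforce
    ultimately show "xs \<in> {xs. set xs \<subseteq> {0..g} \<and> length xs \<le> g}" by simp
  qed
  show "finite {xs. set xs \<subseteq> {0..g} \<and> length xs \<le> g}" by (rule finite_lists_length_le) simp
qed

lemma S_img:
  assumes R: "\<And>xs. R (xs@[y]) = R xs" and y: "y = 1 \<or> y = 2"
  shows "{xs \<in> S R (g + y). xs \<noteq> [] \<and> last xs = y} = (\<lambda>xs. xs@[y]) ` S R g"
proof
  show "{xs \<in> S R (g + y). xs \<noteq> [] \<and> last xs = y} \<subseteq> (\<lambda>xs. xs@[y]) ` S R g"
  proof
    fix xs assume "xs \<in> {xs \<in> S R (g + y). xs \<noteq> [] \<and> last xs = y}"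
    hence a: "Q xs" "sum_list xs = g + y" "R xs" "xs \<noteq> []" "last xs = y" unfolding S_def by auto
    have e: "xs = butlast xs @ [y]" using a(4,5) append_butlast_last_id by metis
    have "Q (butlast xs)" using a(1) e Q_append[OF y] by metis
    moreover have "R (butlast xs)" using a(3) e R by metis
    moreover have "sum_list (butlast xs) = g" using a(2) e by (metis sum_list_append sum_list_simps add_0_right add_right_cancel)
    ultimately have "butlast xs \<in> S R g" unfolding S_def by simp
    thus "xs \<in> (\<lambda>xs. xs@[y]) ` S R g" using e by blast
  qed
  show "(\<lambda>xs. xs@[y]) ` S R g \<subseteq> {xs \<in> S R (g + y). xs \<noteq> [] \<and> last xs = y}"
  proof
    fix xs assume "xs \<in> (\<lambda>xs. xs@[y]) ` S R g"
    then obtain zs where z: "zs \<in> S R g" "xs = zs @ [y]" by blast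
    hence "Q zs" "R zs" "sum_list zs = g" unfolding S_def by auto
    hence "Q xs" "R xs" "sum_list xs = g + y" using z(2) Q_append[OF y] R by auto
    thus "xs \<in> {xs \<in> S R (g + y). xs \<noteq> [] \<and> last xs = y}" using z(2) unfolding S_def by simp
  qed
qed

lemma decomp:
  assumes R: "\<And>xs y. y = 1 \<or> y = 2 \<Longrightarrow> R (xs@[y]) = R xs"
  shows "card (S R (Suc (Suc g))) = card {xs \<in> S R (Suc (Suc g)). xs \<noteq> [] \<and> last xs = 3}
     + card (S R (Suc g)) + card (S R g)"
proof -
  let ?S = "S R (Suc (Suc g))"
  let ?T = "\<lambda>y. {xs \<in> ?S. xs \<noteq> [] \<and> last xs = y}"
  have split: "?S = ?T 3 \<union> ?T 1 \<union> ?T 2"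
  proof (rule set_eqI)
    fix xs
    show "xs \<in> ?S \<longleftrightarrow> xs \<in> ?T 3 \<union> ?T 1 \<union> ?T 2"
    proof
      assume xs: "xs \<in> ?S"
      hence ne: "xs \<noteq> []" unfolding S_def by auto
      hence "last xs \<in> set xs" by simp
      hence "0 < last xs \<and> last xs \<le> 3" using xs Q_pos unfolding S_def by blast
      hence "last xs = 1 \<or> last xs = 2 \<or> last xs = 3" by linarith
      thus "xs \<in> ?T 3 \<union> ?T 1 \<union> ?T 2" using xs ne by auto
    qed auto
  qed
  have f: "finite (?T y)" for y using finite_S by simp
  have "card ?S = card (?T 3) + card (?T 1) + card (?T 2)"
  proof -
    have d1: "(?T 3 \<union> ?T 1) \<inter> ?T 2 = {}" by auto
    have d2: "?T 3 \<inter> ?T 1 = {}" by auto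
    have "card (?T 3 \<union> ?T 1 \<union> ?T 2) = card (?T 3 \<union> ?T 1) + card (?T 2)"
      using card_Un_disjoint[OF _ f d1] f by blast
    also have "card (?T 3 \<union> ?T 1) = card (?T 3) + card (?T 1)"
      using card_Un_disjoint[OF f f d2] .
    finally show ?thesis using split by simp
  qed
  moreover have "?T 1 = (\<lambda>xs. xs@[1]) ` S R (Suc g)"
    using S_img[of R 1 "Suc g"] R by simp
  moreover have "?T 2 = (\<lambda>xs. xs@[2]) ` S R g"
    using S_img[of R 2 g] R by simp
  moreover have "inj_on (\<lambda>xs. xs@[y]) A" for y :: nat and A by (rule inj_onI) simp
  ultimately show ?thesis by (simp add: card_image)
qed


lemma comp_max3: "xs \<noteq> [] \<Longrightarrow> comp_max xs = 3 \<longleftrightarrow> 3 \<in> set xs \<and> (\<forall>x\<in>set xs. x \<le> 3)"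
  unfolding comp_max_def by (subst Max_eq_iff) auto

lemma a_eq: "a_max3 g = card (S (\<lambda>xs. 3 \<in> set xs) g)"
proof -
  have "{xs. nsg_composition xs \<and> genus xs = g \<and> xs \<noteq> [] \<and> comp_max xs = 3} = S (\<lambda>xs. 3 \<in> set xs) g"
  proof (rule set_eqI)
    fix xs
    show "xs \<in> {xs. nsg_composition xs \<and> genus xs = g \<and> xs \<noteq> [] \<and> comp_max xs = 3} \<longleftrightarrow>
          xs \<in> S (\<lambda>xs. 3 \<in> set xs) g"
    proof (cases "xs = []")
      case True thus ?thesis unfolding S_def by simp
    next
      case False
      have "(nsg_composition xs \<and> genus xs = g \<and> xs \<noteq> [] \<and> comp_max xs = 3) \<longleftrightarrow>
            (Q xs \<and> sum_list xs = g \<and> 3 \<in> set xs)"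
        unfolding comp_max3[OF False] Q_def genus_def using False by blast
      thus ?thesis unfolding S_def by simp
    qed
  qed
  thus ?thesis unfolding a_max3_def by simp
qed

lemma b_eq: "b_le3 g = card (S (\<lambda>_. True) g)"
proof -
  have "{xs. nsg_composition xs \<and> genus xs = g \<and> (\<forall>x\<in>set xs. x \<le> 3)} = S (\<lambda>_. True) g"
    unfolding S_def Q_def genus_def by blast
  thus ?thesis unfolding b_le3_def by simp
qed

lemma c_eq: "ctilde g = card {xs \<in> S R g. xs \<noteq> [] \<and> last xs = 3}"
  if "R = (\<lambda>xs. 3 \<in> set xs) \<or> R = (\<lambda>_. True)" for R
proof -
  have "{xs. nsg_composition xs \<and> genus xs = g \<and> xs \<noteq> [] \<and> comp_max xs = 3 \<and> last xs = 3}
    = {xs \<in> S R g. xs \<noteq> [] \<and> last xs = 3}"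
  proof (rule set_eqI)
    fix xs
    show "xs \<in> {xs. nsg_composition xs \<and> genus xs = g \<and> xs \<noteq> [] \<and> comp_max xs = 3 \<and> last xs = 3}
       \<longleftrightarrow> xs \<in> {xs \<in> S R g. xs \<noteq> [] \<and> last xs = 3}"
    proof (cases "xs = []")
      case True thus ?thesis by simp
    next
      case False
      have l: "last xs = 3 \<Longrightarrow> 3 \<in> set xs" using False last_in_set by metis
      have r: "last xs = 3 \<Longrightarrow> R xs" using l that by blast
      have "(nsg_composition xs \<and> genus xs = g \<and> xs \<noteq> [] \<and> comp_max xs = 3 \<and> last xs = 3) \<longleftrightarrow>
            ((Q xs \<and> sum_list xs = g \<and> R xs) \<and> xs \<noteq> [] \<and> last xs = 3)"
        unfolding comp_max3[OF False] Q_def genus_def using False l r by blast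
      thus ?thesis unfolding S_def by simp
    qed
  qed
  thus ?thesis unfolding ctilde_def by simp
qed

lemma sum3: "3 \<in> set xs \<Longrightarrow> 3 \<le> sum_list (xs::nat list)"
  by (simp add: member_le_sum_list)

lemma c_small: "g < 3 \<Longrightarrow> ctilde g = 0"
proof -
  assume g: "g < 3"
  have E: "{xs \<in> S (\<lambda>xs. 3 \<in> set xs) g. xs \<noteq> [] \<and> last xs = 3} = {}"
    unfolding S_def using sum3 g by fastforce
  have "ctilde g = card {xs \<in> S (\<lambda>xs. 3 \<in> set xs) g. xs \<noteq> [] \<and> last xs = 3}"
    by (rule c_eq) simp
  thus ?thesis unfolding E by simp
qed

lemma a_small: "g < 3 \<Longrightarrow> a_max3 g = 0"
proof -
  assume g: "g < 3"
  have "S (\<lambda>xs. 3 \<in> set xs) g = {}" unfolding S_def using sum3 g by fastforce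
  thus ?thesis using a_eq by simp
qed

lemma Q_nil: "Q []" unfolding Q_def nsg_composition_def by simp
lemma Q_one: "Q [1]" unfolding Q_def nsg_composition_def by simp

lemma b0: "b_le3 0 = 1"
proof -
  have "S (\<lambda>_. True) 0 = {[]}"
  proof (rule set_eqI)
    fix xs show "xs \<in> S (\<lambda>_. True) 0 \<longleftrightarrow> xs \<in> {[]}"
    proof
      assume "xs \<in> S (\<lambda>_. True) 0"
      hence q: "Q xs" "sum_list xs = 0" unfolding S_def by auto
      show "xs \<in> {[]}"
      proof (cases xs)
        case Nil thus ?thesis by simp
      next
        case (Cons x ys)
        have "0 < x" using Q_pos[OF q(1)] Cons by simp
        moreover have "x \<le> sum_list xs" using Cons member_le_sum_list by simp
        ultimately show ?thesis using q(2) by simp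
      qed
    qed (use Q_nil in \<open>simp add: S_def\<close>)
  qed
  thus ?thesis using b_eq by simp
qed

lemma b1: "b_le3 1 = 1"
proof -
  have "S (\<lambda>_. True) 1 = {[1]}"
  proof (rule set_eqI)
    fix xs show "xs \<in> S (\<lambda>_. True) 1 \<longleftrightarrow> xs \<in> {[1]}"
    proof
      assume "xs \<in> S (\<lambda>_. True) 1"
      hence q: "Q xs" "sum_list xs = 1" unfolding S_def by auto
      show "xs \<in> {[1]}"
      proof (cases xs)
        case Nil thus ?thesis using q by simp
      next
        case (Cons x ys)
        have "0 < x" using Q_pos[OF q(1)] Cons by simp
        moreover have "x + sum_list ys = 1" using q(2) Cons by simp
        ultimately have x: "x = 1" "sum_list ys = 0" by linarith+
        have "ys = []"
        proof (rule ccontr)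
          assume "ys \<noteq> []" then obtain z zs where "ys = z # zs" by (cases ys) auto
          moreover have "0 < z" using Q_pos[OF q(1)] Cons \<open>ys = z # zs\<close> by simp
          ultimately show False using x by simp
        qed
        thus ?thesis using Cons x by simp
      qed
    qed (use Q_one in \<open>simp add: S_def\<close>)
  qed
  thus ?thesis using b_eq by simp
qed

theorem proposition13p1:
  fixes Ct :: "rat fps"
  defines "Ct \<equiv> Abs_fps (\<lambda>g. if 3 \<le> g then of_nat (ctilde g) else 0)"
  shows "Abs_fps (\<lambda>g. of_nat (a_max3 g)) = Ct / (1 - fps_X - fps_X ^ 2) \<and>
         Abs_fps (\<lambda>g. of_nat (b_le3 g)) = (1 + Ct) / (1 - fps_X - fps_X ^ 2)"
proof
  let ?e = "\<lambda>g. if 3 \<le> g then of_nat (ctilde g) else (0::rat)"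
  have ce: "?e n = of_nat (ctilde n)" for n using c_small[of n] by auto
  have RA: "\<And>xs y. y = 1 \<or> y = 2 \<Longrightarrow> (3 \<in> set (xs@[y])) = (3 \<in> set (xs::nat list))" by auto
  have RB: "\<And>xs y. y = 1 \<or> y = 2 \<Longrightarrow> True = True" by auto
  show "Abs_fps (\<lambda>g. of_nat (a_max3 g)) = Ct / (1 - fps_X - fps_X ^ 2)"
    unfolding Ct_def
  proof (rule fps_rec)
    fix n
    show "of_nat (a_max3 n) = ?e n + (if 1 \<le> n then of_nat (a_max3 (n-1)) else 0)
          + (if 2 \<le> n then of_nat (a_max3 (n-2)) else 0)"
    proof (cases n)
      case 0 thus ?thesis using a_small by simp
    next
      case (Suc k) note k = this
      show ?thesis
      proof (cases k)
        case 0 thus ?thesis using a_small k by simp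
      next
        case (Suc j)
        have "a_max3 n = ctilde n + a_max3 (Suc j) + a_max3 j"
          using decomp[OF RA, of j] c_eq[of "\<lambda>xs. 3 \<in> set xs" "Suc (Suc j)"] a_eq k Suc by simp
        thus ?thesis using k Suc ce[of n] by simp
      qed
    qed
  qed
  have oc: "1 + Ct = Abs_fps (\<lambda>n. (if n = 0 then 1 else 0) + ?e n)"
    unfolding Ct_def by (rule fps_ext) simp
  show "Abs_fps (\<lambda>g. of_nat (b_le3 g)) = (1 + Ct) / (1 - fps_X - fps_X ^ 2)"
    unfolding oc
  proof (rule fps_rec)
    fix n
    show "of_nat (b_le3 n) = ((if n = 0 then 1 else 0) + ?e n) + (if 1 \<le> n then of_nat (b_le3 (n-1)) else 0)
          + (if 2 \<le> n then of_nat (b_le3 (n-2)) else 0)"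
    proof (cases n)
      case 0 thus ?thesis using b0 by simp
    next
      case (Suc k) note k = this
      show ?thesis
      proof (cases k)
        case 0 thus ?thesis using b0 b1 k by simp
      next
        case (Suc j)
        have "b_le3 n = ctilde n + b_le3 (Suc j) + b_le3 j"
          using decomp[of "\<lambda>_. True" j] c_eq[of "\<lambda>_. True" "Suc (Suc j)"] b_eq k Suc by simp
        thus ?thesis using k Suc ce[of n] by simp
      qed
    qed
  qed
qed

end
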